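(* Let $\Bbbk$ be a field of characteristic $0$ and let $J$ be a special Jordan dialgebra such that the algebra $\bar J$ has a unit. Then $\bar J$ is a special Jordan algebra.
   Context: An associative dialgebra is a vector space with bilinear $\vdash,\dashv$ satisfying $(x\dashv y)\vdash z=(x\vdash y)\vdash z$, $x\dashv(y\vdash z)=x\dashv(y\dashv z)$, $(x\vdash y)\vdash z=x\vdash(y\vdash z)$, $(x\dashv y)\dashv z=x\dashv(y\dashv z)$, $(x\vdash y)\dashv z=x\vdash(y\dashv z)$; $D^{(+)}$ is $D$ with $a\vdash_+b=\tfrac12(a\vdash b+b\dashv a)$, $a\dashv_+b=\tfrac12(a\dashv b+b\vdash a)$. A special Jordan dialgebra is a subdialgebra $J$ of some $D^{(+)}$. For such $J$ (operations $\vdash_+,\dashv_+$), $[J,J]=\mathrm{span}\{a\vdash_+b-a\dashv_+b: a,b\in J\}$ is an ideal and $\bar J=J/[J,J]$ is an ordinary (Jordan) algebra. A Jordan algebra is special if it embeds into $A^{(+)}$ (product $\tfrac12(ab+ba)$) for an associative algebra $A$. *)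

theory Defs
  imports Complex_Main
begin

(* Vector spaces over the field 'k are given as a type 'd with additive group
   structure and a scalar multiplication "sc" satisfying the library locale
   vector_space. *)

definition bilinear_op :: "('k::field \<Rightarrow> 'd::ab_group_add \<Rightarrow> 'd) \<Rightarrow> ('d \<Rightarrow> 'd \<Rightarrow> 'd) \<Rightarrow> bool" where
  "bilinear_op sc f \<longleftrightarrow>
     (\<forall>x y z. f (x + y) z = f x z + f y z) \<and>
     (\<forall>x y z. f x (y + z) = f x y + f x z) \<and>
     (\<forall>c x y. f (sc c x) y = sc c (f x y)) \<and>
     (\<forall>c x y. f x (sc c y) = sc c (f x y))"

text \<open>Associative dialgebra (D, lv, rd): lv is the product \<open>\<turnstile>\<close>, rd is \<open>\<stileturn>\<close>.\<close>
definition assoc_dialgebra :: "('k::field \<Rightarrow> 'd::ab_group_add \<Rightarrow> 'd) \<Rightarrow> ('d \<Rightarrow> 'd \<Rightarrow> 'd) \<Rightarrow> ('d \<Rightarrow> 'd \<Rightarrow> 'd) \<Rightarrow> bool" where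
  "assoc_dialgebra sc lv rd \<longleftrightarrow>
     vector_space sc \<and> bilinear_op sc lv \<and> bilinear_op sc rd \<and>
     (\<forall>x y z. lv (rd x y) z = lv (lv x y) z) \<and>
     (\<forall>x y z. rd x (lv y z) = rd x (rd y z)) \<and>
     (\<forall>x y z. lv (lv x y) z = lv x (lv y z)) \<and>
     (\<forall>x y z. rd (rd x y) z = rd x (rd y z)) \<and>
     (\<forall>x y z. rd (lv x y) z = lv x (rd y z))"

definition lv_plus :: "('k::field \<Rightarrow> 'd::ab_group_add \<Rightarrow> 'd) \<Rightarrow> ('d \<Rightarrow> 'd \<Rightarrow> 'd) \<Rightarrow> ('d \<Rightarrow> 'd \<Rightarrow> 'd) \<Rightarrow> 'd \<Rightarrow> 'd \<Rightarrow> 'd" where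
  "lv_plus sc lv rd a b = sc (1/2) (lv a b + rd b a)"

definition rd_plus :: "('k::field \<Rightarrow> 'd::ab_group_add \<Rightarrow> 'd) \<Rightarrow> ('d \<Rightarrow> 'd \<Rightarrow> 'd) \<Rightarrow> ('d \<Rightarrow> 'd \<Rightarrow> 'd) \<Rightarrow> 'd \<Rightarrow> 'd \<Rightarrow> 'd" where
  "rd_plus sc lv rd a b = sc (1/2) (rd a b + lv b a)"

definition special_jordan_subdialgebra ::
  "('k::field \<Rightarrow> 'd::ab_group_add \<Rightarrow> 'd) \<Rightarrow> ('d \<Rightarrow> 'd \<Rightarrow> 'd) \<Rightarrow> ('d \<Rightarrow> 'd \<Rightarrow> 'd) \<Rightarrow> 'd set \<Rightarrow> bool" where
  "special_jordan_subdialgebra sc lv rd J \<longleftrightarrow>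
     assoc_dialgebra sc lv rd \<and> module.subspace sc J \<and>
     (\<forall>a\<in>J. \<forall>b\<in>J. lv_plus sc lv rd a b \<in> J \<and> rd_plus sc lv rd a b \<in> J)"

definition comm_JJ :: "('k::field \<Rightarrow> 'd::ab_group_add \<Rightarrow> 'd) \<Rightarrow> ('d \<Rightarrow> 'd \<Rightarrow> 'd) \<Rightarrow> ('d \<Rightarrow> 'd \<Rightarrow> 'd) \<Rightarrow> 'd set \<Rightarrow> 'd set" where
  "comm_JJ sc lv rd J = module.span sc {lv_plus sc lv rd a b - rd_plus sc lv rd a b | a b. a \<in> J \<and> b \<in> J}"

definition coset_of :: "'d::ab_group_add set \<Rightarrow> 'd \<Rightarrow> 'd set" where
  "coset_of K a = {a + c | c. c \<in> K}"

definition rep :: "'d set \<Rightarrow> 'd" where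
  "rep X = (SOME x. x \<in> X)"

definition Jbar :: "('k::field \<Rightarrow> 'd::ab_group_add \<Rightarrow> 'd) \<Rightarrow> ('d \<Rightarrow> 'd \<Rightarrow> 'd) \<Rightarrow> ('d \<Rightarrow> 'd \<Rightarrow> 'd) \<Rightarrow> 'd set \<Rightarrow> 'd set set" where
  "Jbar sc lv rd J = coset_of (comm_JJ sc lv rd J) ` J"

definition Jbar_add :: "('k::field \<Rightarrow> 'd::ab_group_add \<Rightarrow> 'd) \<Rightarrow> ('d \<Rightarrow> 'd \<Rightarrow> 'd) \<Rightarrow> ('d \<Rightarrow> 'd \<Rightarrow> 'd) \<Rightarrow> 'd set \<Rightarrow> 'd set \<Rightarrow> 'd set \<Rightarrow> 'd set" where
  "Jbar_add sc lv rd J X Y = coset_of (comm_JJ sc lv rd J) (rep X + rep Y)"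

definition Jbar_scale :: "('k::field \<Rightarrow> 'd::ab_group_add \<Rightarrow> 'd) \<Rightarrow> ('d \<Rightarrow> 'd \<Rightarrow> 'd) \<Rightarrow> ('d \<Rightarrow> 'd \<Rightarrow> 'd) \<Rightarrow> 'd set \<Rightarrow> 'k \<Rightarrow> 'd set \<Rightarrow> 'd set" where
  "Jbar_scale sc lv rd J c X = coset_of (comm_JJ sc lv rd J) (sc c (rep X))"

text \<open>Product of \<open>\<bar>J\<close>, induced by \<turnstile>+ (equivalently by \<stileturn>+, they agree modulo [J,J]).\<close>
definition Jbar_mul :: "('k::field \<Rightarrow> 'd::ab_group_add \<Rightarrow> 'd) \<Rightarrow> ('d \<Rightarrow> 'd \<Rightarrow> 'd) \<Rightarrow> ('d \<Rightarrow> 'd \<Rightarrow> 'd) \<Rightarrow> 'd set \<Rightarrow> 'd set \<Rightarrow> 'd set \<Rightarrow> 'd set" where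
  "Jbar_mul sc lv rd J X Y = coset_of (comm_JJ sc lv rd J) (lv_plus sc lv rd (rep X) (rep Y))"

definition assoc_algebra_on ::
  "'a set \<Rightarrow> ('a \<Rightarrow> 'a \<Rightarrow> 'a) \<Rightarrow> 'a \<Rightarrow> ('a \<Rightarrow> 'a) \<Rightarrow> ('k::field \<Rightarrow> 'a \<Rightarrow> 'a) \<Rightarrow> ('a \<Rightarrow> 'a \<Rightarrow> 'a) \<Rightarrow> bool" where
  "assoc_algebra_on A add z neg sc mul \<longleftrightarrow>
     z \<in> A \<and>
     (\<forall>x\<in>A. \<forall>y\<in>A. add x y \<in> A \<and> mul x y \<in> A) \<and>
     (\<forall>x\<in>A. neg x \<in> A) \<and> (\<forall>c. \<forall>x\<in>A. sc c x \<in> A) \<and>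
     (\<forall>x\<in>A. \<forall>y\<in>A. \<forall>w\<in>A. add (add x y) w = add x (add y w)) \<and>
     (\<forall>x\<in>A. \<forall>y\<in>A. add x y = add y x) \<and>
     (\<forall>x\<in>A. add z x = x) \<and>
     (\<forall>x\<in>A. add (neg x) x = z) \<and>
     (\<forall>c. \<forall>x\<in>A. \<forall>y\<in>A. sc c (add x y) = add (sc c x) (sc c y)) \<and>
     (\<forall>c d. \<forall>x\<in>A. sc (c + d) x = add (sc c x) (sc d x)) \<and>
     (\<forall>c d. \<forall>x\<in>A. sc c (sc d x) = sc (c * d) x) \<and>
     (\<forall>x\<in>A. sc 1 x = x) \<and>
     (\<forall>x\<in>A. \<forall>y\<in>A. \<forall>w\<in>A. mul (add x y) w = add (mul x w) (mul y w)) \<and>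
     (\<forall>x\<in>A. \<forall>y\<in>A. \<forall>w\<in>A. mul x (add y w) = add (mul x y) (mul x w)) \<and>
     (\<forall>c. \<forall>x\<in>A. \<forall>y\<in>A. mul (sc c x) y = sc c (mul x y) \<and> mul x (sc c y) = sc c (mul x y)) \<and>
     (\<forall>x\<in>A. \<forall>y\<in>A. \<forall>w\<in>A. mul (mul x y) w = mul x (mul y w))"

text \<open>The carrier of A is taken inside
  the type 'a, supplied at the use site.\<close>
definition special_jordan_algebra ::
  "'a itself \<Rightarrow> 'v set \<Rightarrow> ('v \<Rightarrow> 'v \<Rightarrow> 'v) \<Rightarrow> ('k::field \<Rightarrow> 'v \<Rightarrow> 'v) \<Rightarrow> ('v \<Rightarrow> 'v \<Rightarrow> 'v) \<Rightarrow> bool" where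
  "special_jordan_algebra _ V addV scV mulV \<longleftrightarrow>
     (\<exists>(A :: 'a set) add z neg (sc :: 'k \<Rightarrow> 'a \<Rightarrow> 'a) mul \<phi>.
        assoc_algebra_on A add z neg sc mul \<and>
        \<phi> ` V \<subseteq> A \<and> inj_on \<phi> V \<and>
        (\<forall>x\<in>V. \<forall>y\<in>V. \<phi> (addV x y) = add (\<phi> x) (\<phi> y)) \<and>
        (\<forall>c. \<forall>x\<in>V. \<phi> (scV c x) = sc c (\<phi> x)) \<and>
        (\<forall>x\<in>V. \<forall>y\<in>V. \<phi> (mulV x y) = sc (1/2) (add (mul (\<phi> x) (\<phi> y)) (mul (\<phi> y) (\<phi> x)))))"

end

theory Submission imports Defs begin

definition "Pm lv rd x = (\<lambda>z. (lv x z, rd z x))"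
definition "addP F G = (\<lambda>z. (fst (F z) + fst (G z), snd (F z) + snd (G z)))"
definition "scP sc c F = (\<lambda>z. (sc c (fst (F z)), sc c (snd (F z))))"
definition "negP F = (\<lambda>z. (- fst (F z), - snd (F z)))"
definition "mulP F G = (\<lambda>z. (fst (F (fst (G z))), snd (G (snd (F z)))))"
definition "zeroP = (\<lambda>z. (0,0))"

lemma bil:
  assumes "bilinear_op sc f"
  shows "f (x + y) z = f x z + f y z" "f x (y + w) = f x y + f x w"
    "f (sc c x) y = sc c (f x y)" "f x (sc c y) = sc c (f x y)"
    "f 0 y = 0" "f x 0 = 0" "f (- x) y = - f x y" "f x (- y) = - f x y"
proof -
  show a: "f (x + y) z = f x z + f y z" "f x (y + w) = f x y + f x w"
    "f (sc c x) y = sc c (f x y)" "f x (sc c y) = sc c (f x y)"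
    using assms unfolding bilinear_op_def by auto
  interpret l1: additive "\<lambda>x. f x y" by standard (use assms in \<open>simp add: bilinear_op_def\<close>)
  interpret l2: additive "\<lambda>y. f x y" by standard (use assms in \<open>simp add: bilinear_op_def\<close>)
  show "f 0 y = 0" "f x 0 = 0" "f (- x) y = - f x y" "f x (- y) = - f x y"
    using l1.zero l2.zero l1.minus l2.minus by auto
qed

locale DA =
  fixes sc :: "'k::field \<Rightarrow> 'd::ab_group_add \<Rightarrow> 'd" and lv rd :: "'d \<Rightarrow> 'd \<Rightarrow> 'd"
  assumes da: "assoc_dialgebra sc lv rd"
begin

lemma vs: "vector_space sc" using da by (simp add: assoc_dialgebra_def)
sublocale M: module sc using vs by (simp add: module_iff_vector_space)

lemma blv: "bilinear_op sc lv" and brd: "bilinear_op sc rd" using da by (auto simp: assoc_dialgebra_def)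
lemmas L = bil[OF blv] and R = bil[OF brd]
lemma ax: "lv (rd x y) z = lv (lv x y) z" "rd x (lv y z) = rd x (rd y z)"
  "lv (lv x y) z = lv x (lv y z)" "rd (rd x y) z = rd x (rd y z)"
  using da by (auto simp: assoc_dialgebra_def)

abbreviation "P \<equiv> Pm lv rd"

lemma P_add: "P (x + y) = addP (P x) (P y)"
  by (simp add: Pm_def addP_def L R)
lemma P_sc: "P (sc c x) = scP sc c (P x)"
  by (simp add: Pm_def scP_def L R)
lemma P_neg: "P (- x) = negP (P x)"
  by (simp add: Pm_def negP_def L R)
lemma P_zero: "P 0 = zeroP"
  by (simp add: Pm_def zeroP_def L R)
lemma P_mul: "mulP (P x) (P y) = P (lv x y)"
  by (simp add: Pm_def mulP_def ax)
lemma P_rd: "P (rd x y) = P (lv x y)"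
  by (simp add: Pm_def ax)
lemma P_diff: "P (x - y) = addP (P x) (negP (P y))"
  by (metis P_add P_neg diff_conv_add_uminus)

lemma alg: "assoc_algebra_on (range P) addP zeroP negP (scP sc) mulP"
  unfolding assoc_algebra_on_def
  by (simp add: P_add[symmetric] P_sc[symmetric] P_neg[symmetric] P_zero[symmetric] P_mul
       add_ac M.scale_right_distrib M.scale_left_distrib L R ax
       flip: P_zero)



definition "N = {k. P k = zeroP}"

lemma addP_zero: "addP F zeroP = (F :: 'x \<Rightarrow> ('y::monoid_add \<times> 'y))" by (simp add: addP_def zeroP_def fun_eq_iff prod_eq_iff)
lemma addP_com: "addP F G = addP G (F :: 'x \<Rightarrow> ('y::ab_semigroup_add \<times> 'y))" by (simp add: addP_def add.commute fun_eq_iff prod_eq_iff)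

lemma N_sub: "M.subspace N"
  unfolding M.subspace_def N_def
proof (intro conjI ballI allI; simp)
  show "P 0 = zeroP" by (rule P_zero)
  fix x y assume "P x = zeroP" "P y = zeroP"
  then show "P (x + y) = zeroP" by (simp add: P_add addP_zero)
next
  fix c x assume "P x = zeroP"
  then show "P (sc c x) = zeroP" by (simp add: P_sc scP_def zeroP_def)
qed

lemma gen_N: "lv_plus sc lv rd a b - rd_plus sc lv rd a b \<in> N"
proof -
  have "P (lv_plus sc lv rd a b) = P (rd_plus sc lv rd a b)"
    by (simp add: lv_plus_def rd_plus_def P_sc P_add P_rd addP_com)
  then show ?thesis unfolding N_def
    by (simp add: P_diff addP_def negP_def zeroP_def fun_eq_iff)
qed

lemma N_lv: "k \<in> N \<Longrightarrow> lv k z = 0" and N_rd: "k \<in> N \<Longrightarrow> rd z k = 0"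
  unfolding N_def Pm_def zeroP_def by (auto simp: fun_eq_iff)

lemma coset_rep: "0 \<in> K \<Longrightarrow> \<exists>k\<in>K. rep (coset_of K a) = a + k"
proof -
  assume "0 \<in> K"
  then have "a \<in> coset_of K a" unfolding coset_of_def by force
  then have "rep (coset_of K a) \<in> coset_of K a" unfolding rep_def by (rule someI)
  then show ?thesis unfolding coset_of_def by auto
qed

lemma coset_eq: "M.subspace K \<Longrightarrow> a - b \<in> K \<Longrightarrow> coset_of K a = coset_of K b"
  unfolding coset_of_def
proof safe
  fix c assume K: "M.subspace K" "a - b \<in> K" "c \<in> K"
  have "a + c = b + ((a - b) + c)" by simp
  moreover have "(a - b) + c \<in> K" using K M.subspace_add by blast
  ultimately show "\<exists>c'. a + c = b + c' \<and> c' \<in> K" by blast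
next
  fix c assume K: "M.subspace K" "a - b \<in> K" "c \<in> K"
  have "b + c = a + (c - (a - b))" by simp
  moreover have "c - (a - b) \<in> K" using K M.subspace_diff by blast
  ultimately show "\<exists>c'. b + c = a + c' \<and> c' \<in> K" by blast
qed

end

lemma ind_eq: "((\<lambda>l. if l = a then (1::'k::field) else 0) = (\<lambda>l. if l = b then 1 else 0)) \<longleftrightarrow> a = b"
  by (metis one_neq_zero)

definition enc :: "('d \<Rightarrow> 'd \<times> 'd) \<Rightarrow> ('d set list \<Rightarrow> 'k::field) set" where
  "enc F = {(\<lambda>l. if l = [{x}, {fst (F x)}, {snd (F x)}] then 1 else 0) | x. True}"

lemma inj_enc: "inj (enc :: ('d \<Rightarrow> 'd \<times> 'd) \<Rightarrow> ('d set list \<Rightarrow> 'k::field) set)"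
proof (rule injI)
  fix F G :: "'d \<Rightarrow> 'd \<times> 'd"
  assume e: "(enc F :: ('d set list \<Rightarrow> 'k) set) = enc G"
  show "F = G"
  proof
    fix x
    have "(\<lambda>l. if l = [{x}, {fst (F x)}, {snd (F x)}] then (1::'k) else 0) \<in> enc G"
      using e unfolding enc_def by blast
    then obtain y where "(\<lambda>l. if l = [{x}, {fst (F x)}, {snd (F x)}] then (1::'k) else 0)
       = (\<lambda>l. if l = [{y}, {fst (G y)}, {snd (G y)}] then 1 else 0)"
      unfolding enc_def by blast
    then have "[{x}, {fst (F x)}, {snd (F x)}] = [{y}, {fst (G y)}, {snd (G y)}]"
      by (simp only: ind_eq)
    then show "F x = G x" by (auto simp: prod_eq_iff)
  qed
qed

lemma transport:
  assumes "assoc_algebra_on B add z neg sc mul" "inj e"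
  shows "assoc_algebra_on (e ` B) (\<lambda>x y. e (add (inv e x) (inv e y))) (e z)
     (\<lambda>x. e (neg (inv e x))) (\<lambda>c x. e (sc c (inv e x))) (\<lambda>x y. e (mul (inv e x) (inv e y)))"
proof -
  have bi: "\<And>f A P. (\<forall>x\<in>f ` A. P x) \<longleftrightarrow> (\<forall>y\<in>A. P (f y))" by auto
  show ?thesis unfolding assoc_algebra_on_def
    apply (simp only: bi inv_f_f[OF assms(2)] inj_image_mem_iff[OF assms(2)] inj_eq[OF assms(2)]) 
    by (rule assms(1)[unfolded assoc_algebra_on_def])
qed


theorem mainTheorem18:
  fixes sc :: "'k::field_char_0 \<Rightarrow> 'd::ab_group_add \<Rightarrow> 'd"
    and lv rd :: "'d \<Rightarrow> 'd \<Rightarrow> 'd"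
    and J :: "'d set"
  assumes "special_jordan_subdialgebra sc lv rd J"
    and "\<exists>E\<in>Jbar sc lv rd J. \<forall>X\<in>Jbar sc lv rd J.
           Jbar_mul sc lv rd J E X = X \<and> Jbar_mul sc lv rd J X E = X"
  shows "special_jordan_algebra TYPE(('d set list \<Rightarrow> 'k) set) (Jbar sc lv rd J)
           (Jbar_add sc lv rd J) (Jbar_scale sc lv rd J) (Jbar_mul sc lv rd J)"
proof -
  have da: "assoc_dialgebra sc lv rd" and Jsub: "module.subspace sc J"
    and Jcl: "\<And>a b. a \<in> J \<Longrightarrow> b \<in> J \<Longrightarrow> lv_plus sc lv rd a b \<in> J \<and> rd_plus sc lv rd a b \<in> J"
    using assms(1) unfolding special_jordan_subdialgebra_def by auto
  interpret DA sc lv rd by (rule DA.intro[OF da])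
  define K where "K = comm_JJ sc lv rd J"
  define S where "S = {lv_plus sc lv rd a b - rd_plus sc lv rd a b | a b. a \<in> J \<and> b \<in> J}"
  have KS: "K = M.span S" unfolding K_def S_def comm_JJ_def by simp
  have Ksub: "M.subspace K" unfolding KS by simp
  have SJ: "S \<subseteq> J" unfolding S_def using Jcl M.subspace_diff[OF Jsub] by blast
  have KJ: "K \<subseteq> J" unfolding KS by (rule M.span_minimal[OF SJ Jsub])
  have SN: "S \<subseteq> N" unfolding S_def using gen_N by blast
  have KN: "K \<subseteq> N" unfolding KS by (rule M.span_minimal[OF SN N_sub])
  have K0: "0 \<in> K" by (rule M.subspace_0[OF Ksub])
  have SK: "S \<subseteq> K" unfolding KS by (rule M.span_superset)
  have Pk: "k \<in> K \<Longrightarrow> P k = zeroP" for k using KN unfolding N_def by blast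
  have Prep: "P (rep (coset_of K a)) = P a" for a
    using coset_rep[OF K0, of a] Pk by (auto simp: P_add addP_zero)
  have repJ: "rep (coset_of K a) \<in> J" if "a \<in> J" for a
  proof -
    obtain k where k: "k \<in> K" "rep (coset_of K a) = a + k" using coset_rep[OF K0, of a] by blast
    show ?thesis unfolding k(2) by (rule M.subspace_add[OF Jsub that]) (use k KJ in blast)
  qed
  have JbarD: "X \<in> Jbar sc lv rd J \<Longrightarrow> \<exists>x\<in>J. X = coset_of K x" for X
    unfolding Jbar_def K_def by blast
  define \<phi> where "\<phi> = (\<lambda>X. (enc (P (rep X)) :: ('d set list \<Rightarrow> 'k) set))"
  define e where "e = (enc :: _ \<Rightarrow> ('d set list \<Rightarrow> 'k) set)"
  have inje: "inj e" unfolding e_def by (rule inj_enc)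
  have inj: "inj_on \<phi> (Jbar sc lv rd J)"
  proof (rule inj_onI)
    fix X Y assume X: "X \<in> Jbar sc lv rd J" and Y: "Y \<in> Jbar sc lv rd J" and eq: "\<phi> X = \<phi> Y"
    obtain x where x: "x \<in> J" "X = coset_of K x" using JbarD[OF X] by blast
    obtain y where y: "y \<in> J" "Y = coset_of K y" using JbarD[OF Y] by blast
    have PP: "P x = P y" using eq inj_enc unfolding \<phi>_def x y Prep by (auto dest: injD)
    define u where "u = x - y"
    have uJ: "u \<in> J" unfolding u_def using x y M.subspace_diff[OF Jsub] by blast
    have Pu: "P u = zeroP" unfolding u_def P_diff PP
      by (simp add: addP_def negP_def zeroP_def fun_eq_iff)
    obtain E where E: "E \<in> Jbar sc lv rd J" and EU: "\<forall>X\<in>Jbar sc lv rd J. Jbar_mul sc lv rd J E X = X"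
      using assms(2) by auto
    obtain e0 where e0: "e0 \<in> J" "E = coset_of K e0" using JbarD[OF E] by blast
    have UJ: "coset_of K u \<in> Jbar sc lv rd J" unfolding Jbar_def K_def using uJ by (rule imageI)
    have "Jbar_mul sc lv rd J E (coset_of K u) = coset_of K u" using EU UJ by (rule bspec)
    then have eu: "coset_of K (lv_plus sc lv rd (rep E) (rep (coset_of K u))) = coset_of K u"
      unfolding Jbar_mul_def K_def by simp
    define w where "w = rep (coset_of K u)"
    have wJ: "w \<in> J" unfolding w_def by (rule repJ[OF uJ])
    have wN: "w \<in> N" unfolding N_def w_def using Prep[of u] Pu by simp
    have rEJ: "rep E \<in> J" unfolding e0 by (rule repJ[OF e0(1)])
    have "rd_plus sc lv rd (rep E) w = 0"
      unfolding rd_plus_def using N_lv[OF wN] N_rd[OF wN] by simp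
    moreover have "lv_plus sc lv rd (rep E) w - rd_plus sc lv rd (rep E) w \<in> K"
      using SK rEJ wJ unfolding S_def by blast
    ultimately have lK: "lv_plus sc lv rd (rep E) w \<in> K" by simp
    have "u \<in> coset_of K u" unfolding coset_of_def using K0 by force
    then have "u \<in> coset_of K (lv_plus sc lv rd (rep E) w)" using eu unfolding w_def by simp
    then obtain c where "c \<in> K" "u = lv_plus sc lv rd (rep E) w + c" unfolding coset_of_def by blast
    then have uK: "u \<in> K" using lK M.subspace_add[OF Ksub] by simp
    show "X = Y" unfolding x y by (rule coset_eq[OF Ksub uK[unfolded u_def]])
  qed
  have alg2: "assoc_algebra_on (e ` range P) (\<lambda>x y. e (addP (inv e x) (inv e y))) (e zeroP)
     (\<lambda>x. e (negP (inv e x))) (\<lambda>c x. e (scP sc c (inv e x))) (\<lambda>x y. e (mulP (inv e x) (inv e y)))"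
    by (rule transport[OF alg inje])
  show ?thesis
    unfolding special_jordan_algebra_def
  proof (intro exI conjI)
    show "assoc_algebra_on (e ` range P) (\<lambda>x y. e (addP (inv e x) (inv e y))) (e zeroP)
     (\<lambda>x. e (negP (inv e x))) (\<lambda>c x. e (scP sc c (inv e x))) (\<lambda>x y. e (mulP (inv e x) (inv e y)))"
      by (rule alg2)
    show "\<phi> ` Jbar sc lv rd J \<subseteq> e ` range P" unfolding \<phi>_def e_def by auto
    show "inj_on \<phi> (Jbar sc lv rd J)" by (rule inj)
    show "\<forall>x\<in>Jbar sc lv rd J. \<forall>y\<in>Jbar sc lv rd J. \<phi> (Jbar_add sc lv rd J x y) = e (addP (inv e (\<phi> x)) (inv e (\<phi> y)))"
      unfolding \<phi>_def Jbar_add_def e_def[symmetric] K_def[symmetric]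
      by (simp add: inv_f_f[OF inje] Prep P_add)
    show "\<forall>c. \<forall>x\<in>Jbar sc lv rd J. \<phi> (Jbar_scale sc lv rd J c x) = e (scP sc c (inv e (\<phi> x)))"
      unfolding \<phi>_def Jbar_scale_def e_def[symmetric] K_def[symmetric]
      by (simp add: inv_f_f[OF inje] Prep P_sc)
    show "\<forall>x\<in>Jbar sc lv rd J. \<forall>y\<in>Jbar sc lv rd J. \<phi> (Jbar_mul sc lv rd J x y) =
       e (scP sc (1 / 2) (inv e (e (addP (inv e (e (mulP (inv e (\<phi> x)) (inv e (\<phi> y)))))
             (inv e (e (mulP (inv e (\<phi> y)) (inv e (\<phi> x)))))))))"
      unfolding \<phi>_def Jbar_mul_def e_def[symmetric] K_def[symmetric]
      by (simp add: inv_f_f[OF inje] Prep P_mul lv_plus_def P_sc P_add P_rd)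
  qed
qed

end
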